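(* Let $G$ be a connected graph on $n\ge2$ vertices, $\alpha\in\mathbb{R}$, with vertices labeled so that $({}^\alpha\mathbb{M})_1\ge({}^\alpha\mathbb{M})_2\ge\cdots\ge({}^\alpha\mathbb{M})_n$. Let $N=\max_{1\le i,j\le n} d_{ij}\mathbb{D}_j^\alpha/\mathbb{D}_i^\alpha$. Then for $1\le i\le n$, \[\rho(\mathbb{D}(G))\le \frac{({}^\alpha\mathbb{M})_i-N+\sqrt{(({}^\alpha\mathbb{M})_i+N)^2+4N\sum_{k=1}^{i-1}\big(({}^\alpha\mathbb{M})_k-({}^\alpha\mathbb{M})_i\big)}}{2}.\] Equality holds if and only if $({}^\alpha\mathbb{M})_1=\cdots=({}^\alpha\mathbb{M})_n$, or for some $2\le t\le i$: (i) $d_{kl}\mathbb{D}_l^\alpha/\mathbb{D}_k^\alpha=N$ for all $1\le k\le n$, $1\le l\le t-1$, $k\ne l$; (ii) $({}^\alpha\mathbb{M})_t=\cdots=({}^\alpha\mathbb{M})_n$.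
   Context: $\mathbb{D}(G)=(d_{ij})$ is the distance matrix of $G$, $d_{ij}$ the distance between $v_i$ and $v_j$. The transmission of $v_i$ is $\mathbb{D}_i=\sum_{j}d_{ij}$. The generalized average transmission is $({}^\alpha\mathbb{M})_i=\frac{\sum_{j=1}^n d_{ij}\mathbb{D}_j^\alpha}{\mathbb{D}_i^\alpha}$. $\rho$ is the spectral radius. An empty sum equals $0$. *)

theory Defs
  imports Complex_Main "Jordan_Normal_Form.Spectral_Radius"
begin

definition simple_graph :: "nat \<Rightarrow> (nat \<Rightarrow> nat \<Rightarrow> bool) \<Rightarrow> bool" where
  "simple_graph n E \<longleftrightarrow>
     (\<forall>i j. E i j \<longrightarrow> i < n \<and> j < n) \<and> (\<forall>i j. E i j \<longrightarrow> E j i) \<and> (\<forall>i. \<not> E i i)"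

definition is_walk :: "nat \<Rightarrow> (nat \<Rightarrow> nat \<Rightarrow> bool) \<Rightarrow> nat list \<Rightarrow> nat \<Rightarrow> nat \<Rightarrow> bool" where
  "is_walk n E p i j \<longleftrightarrow> p \<noteq> [] \<and> hd p = i \<and> last p = j \<and> (\<forall>v\<in>set p. v < n)
     \<and> (\<forall>m. Suc m < length p \<longrightarrow> E (p ! m) (p ! Suc m))"

definition connected_graph :: "nat \<Rightarrow> (nat \<Rightarrow> nat \<Rightarrow> bool) \<Rightarrow> bool" where
  "connected_graph n E \<longleftrightarrow> simple_graph n E \<and> (\<forall>i<n. \<forall>j<n. \<exists>p. is_walk n E p i j)"

definition gdist :: "nat \<Rightarrow> (nat \<Rightarrow> nat \<Rightarrow> bool) \<Rightarrow> nat \<Rightarrow> nat \<Rightarrow> nat" where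
  "gdist n E i j = (LEAST k. \<exists>p. is_walk n E p i j \<and> length p = Suc k)"

text \<open>Distance matrix D(G) as a complex matrix (for the spectral radius).\<close>

definition dist_mat :: "nat \<Rightarrow> (nat \<Rightarrow> nat \<Rightarrow> bool) \<Rightarrow> complex mat" where
  "dist_mat n E = mat n n (\<lambda>(i, j). of_nat (gdist n E i j))"

definition transmission :: "nat \<Rightarrow> (nat \<Rightarrow> nat \<Rightarrow> bool) \<Rightarrow> nat \<Rightarrow> real" where
  "transmission n E i = (\<Sum>j<n. real (gdist n E i j))"

definition gen_avg_trans :: "nat \<Rightarrow> (nat \<Rightarrow> nat \<Rightarrow> bool) \<Rightarrow> real \<Rightarrow> nat \<Rightarrow> real" where
  "gen_avg_trans n E \<alpha> i =
     (\<Sum>j<n. real (gdist n E i j) * transmission n E j powr \<alpha>) / transmission n E i powr \<alpha>"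

end

theory Submission
  imports Defs
begin


lemma gdist_walk:
  assumes "connected_graph n E" "i < n" "j < n"
  shows "\<exists>p. is_walk n E p i j \<and> length p = Suc (gdist n E i j)"
proof -
  obtain p where p: "is_walk n E p i j" using assms unfolding connected_graph_def by blast
  hence "p \<noteq> []" unfolding is_walk_def by auto
  hence "\<exists>k p. is_walk n E p i j \<and> length p = Suc k" using p
    by (intro exI[of _ "length p - 1"] exI[of _ p]) auto
  from LeastI_ex[OF this] show ?thesis unfolding gdist_def .
qed

lemma gdist_self: "i < n \<Longrightarrow> gdist n E i i = 0"
  unfolding gdist_def by (rule Least_eq_0, rule exI[of _ "[i]"], simp add: is_walk_def)

lemma gdist_pos:
  assumes "connected_graph n E" "i < n" "j < n" "i \<noteq> j"
  shows "0 < gdist n E i j"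
proof (rule ccontr)
  assume "\<not> 0 < gdist n E i j"
  hence "gdist n E i j = 0" by simp
  with gdist_walk[OF assms(1-3)] obtain p where "is_walk n E p i j" "length p = 1" by auto
  then obtain x where "p = [x]" "hd p = i" "last p = j" unfolding is_walk_def
    by (cases p) auto
  thus False using assms(4) by simp
qed

lemma transmission_pos:
  assumes "connected_graph n E" "2 \<le> n" "k < n"
  shows "0 < transmission n E k"
proof -
  define j where "j = (if k = 0 then 1 else 0::nat)"
  have j: "j < n" "j \<noteq> k" using assms unfolding j_def by auto
  have "0 < real (gdist n E k j)" using gdist_pos[OF assms(1,3) j(1)] j(2) by simp
  also have "\<dots> \<le> (\<Sum>l<n. real (gdist n E k l))"
    by (rule member_le_sum) (use j in auto)
  finally show ?thesis unfolding transmission_def .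
qed



lemma eig_core:
  fixes A :: "complex mat" and d :: "nat \<Rightarrow> nat \<Rightarrow> real" and w :: "nat \<Rightarrow> real"
  assumes A: "A \<in> carrier_mat n n"
  and Aent: "\<And>k l. k<n \<Longrightarrow> l<n \<Longrightarrow> A $$ (k,l) = complex_of_real (d k l)"
  and ev: "eigenvector A v lam"
  and wpos: "\<And>k. k<n \<Longrightarrow> 0 < w k"
  and dnn: "\<And>k l. k<n \<Longrightarrow> l<n \<Longrightarrow> 0 \<le> d k l"
  and rows: "\<And>k. k<n \<Longrightarrow> (\<Sum>l<n. d k l * w l) / w k \<le> \<theta>"
  shows "cmod lam \<le> \<theta> \<and> ((\<forall>k l. k<n \<longrightarrow> l<n \<longrightarrow> k\<noteq>l \<longrightarrow> 0 < d k l) \<longrightarrow> \<theta> \<le> cmod lam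
           \<longrightarrow> (\<forall>k<n. (\<Sum>l<n. d k l * w l) / w k = \<theta>))"
proof -
  have v: "v \<in> carrier_vec n" and v0: "v \<noteq> 0\<^sub>v n" and Av: "A *\<^sub>v v = lam \<cdot>\<^sub>v v"
    using ev A unfolding eigenvector_def by auto
  have evk: "(\<Sum>l<n. complex_of_real (d k l) * v$l) = lam * v$k" if k: "k<n" for k
  proof -
    have "(A *\<^sub>v v) $ k = lam * v$k" using Av k v by simp
    moreover have "(A *\<^sub>v v) $ k = (\<Sum>l<n. complex_of_real (d k l) * v$l)"
      using k A v by (auto simp: scalar_prod_def Aent atLeast0LessThan intro!: sum.cong)
    ultimately show ?thesis by simp
  qed
  obtain k0 where k0: "k0 < n" "v $ k0 \<noteq> 0"
  proof -
    have "\<exists>k<n. v $ k \<noteq> 0"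
    proof (rule ccontr)
      assume "\<not> ?thesis"
      hence "v = 0\<^sub>v n" using v by (intro eq_vecI) auto
      thus False using v0 by simp
    qed
    thus ?thesis using that by blast
  qed
  define q where "q k = cmod (v$k) / w k" for k
  define m where "m = Max (q ` {..<n})"
  have qle: "q k \<le> m" if "k < n" for k unfolding m_def using that by (intro Max_ge) auto
  obtain p where p: "p < n" "q p = m"
  proof -
    have "m \<in> q ` {..<n}" unfolding m_def using k0 by (intro Max_in) auto
    thus ?thesis using that by auto
  qed
  have qnn: "0 \<le> q k" if "k<n" for k unfolding q_def using wpos[OF that] by simp
  have mpos: "0 < m"
  proof -
    have "0 < q k0" unfolding q_def using wpos[OF k0(1)] k0 by simp
    thus ?thesis using qle[OF k0(1)] by simp
  qed
  have vq: "cmod (v$k) = w k * q k" if "k<n" for k unfolding q_def using wpos[OF that] by simp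
  have bound: "cmod lam * cmod (v$k) \<le> (\<Sum>l<n. d k l * w l * q l)" if k: "k<n" for k
  proof -
    have "cmod lam * cmod (v$k) = cmod (\<Sum>l<n. complex_of_real (d k l) * v$l)"
      using evk[OF k] by (simp add: norm_mult)
    also have "\<dots> \<le> (\<Sum>l<n. cmod (complex_of_real (d k l) * v$l))" by (rule norm_sum)
    also have "\<dots> = (\<Sum>l<n. d k l * w l * q l)"
      by (rule sum.cong) (auto simp: norm_mult vq dnn[OF k])
    finally show ?thesis .
  qed
  have upper: "(\<Sum>l<n. d k l * w l * q l) \<le> m * (\<Sum>l<n. d k l * w l)" if k: "k<n" for k
  proof -
    have "(\<Sum>l<n. d k l * w l * q l) \<le> (\<Sum>l<n. d k l * w l * m)"
      by (rule sum_mono) (auto intro!: mult_left_mono qle dnn[OF k] mult_nonneg_nonneg less_imp_le[OF wpos])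
    thus ?thesis by (simp add: sum_distrib_left mult.commute)
  qed
  have rowsk: "(\<Sum>l<n. d k l * w l) \<le> \<theta> * w k" if k: "k<n" for k
    using rows[OF k] wpos[OF k] by (simp add: divide_le_eq)
  have main: "cmod lam * (w p * m) \<le> m * (\<theta> * w p)"
    using bound[OF p(1)] upper[OF p(1)] vq[OF p(1)] p(2) rowsk[OF p(1)] mpos
    by (smt (verit, best) mult_left_mono)
  have part1: "cmod lam \<le> \<theta>"
  proof -
    have "cmod lam * (w p * m) \<le> \<theta> * (w p * m)" using main by (simp add: ac_simps)
    thus ?thesis using wpos[OF p(1)] mpos by simp
  qed
  have part2: "\<forall>k<n. (\<Sum>l<n. d k l * w l) / w k = \<theta>"
    if dpos: "\<forall>k l. k<n \<longrightarrow> l<n \<longrightarrow> k\<noteq>l \<longrightarrow> 0 < d k l" and th: "\<theta> \<le> cmod lam"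
  proof -
    have "\<theta> * (w p * m) \<le> cmod lam * (w p * m)" using th wpos[OF p(1)] mpos by simp
    hence A1: "\<theta> * (w p * m) \<le> (\<Sum>l<n. d p l * w l * q l)" using bound[OF p(1)] vq[OF p(1)] p(2) by simp
    have "(\<Sum>l<n. d p l * w l * (m - q l)) = m * (\<Sum>l<n. d p l * w l) - (\<Sum>l<n. d p l * w l * q l)"
      by (simp add: sum_distrib_left right_diff_distrib sum_subtractf ac_simps)
    also have "\<dots> \<le> 0" using A1 rowsk[OF p(1)] mpos
      by (smt (verit, best) mult_left_mono mult.commute mult.left_commute)
    finally have le0: "(\<Sum>l<n. d p l * w l * (m - q l)) \<le> 0" .
    have nn: "\<forall>l\<in>{..<n}. 0 \<le> d p l * w l * (m - q l)"
    proof
      fix l assume "l \<in> {..<n}"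
      hence l: "l < n" by simp
      have "0 \<le> d p l" "0 \<le> w l" "0 \<le> m - q l" using dnn[OF p(1) l] wpos[OF l] qle[OF l] by auto
      thus "0 \<le> d p l * w l * (m - q l)" by simp
    qed
    hence "(\<Sum>l<n. d p l * w l * (m - q l)) = 0" using le0 sum_nonneg[of "{..<n}"] by (meson antisym)
    hence z: "\<forall>l\<in>{..<n}. d p l * w l * (m - q l) = 0" using nn sum_nonneg_eq_0_iff[of "{..<n}" "\<lambda>l. d p l * w l * (m - q l)"] by blast
    have qm: "q l = m" if l: "l<n" for l
    proof (cases "l = p")
      case True thus ?thesis using p by simp
    next
      case False
      hence "0 < d p l" using dpos p(1) l by auto
      thus ?thesis using z l wpos[OF l] by force
    qed
    show ?thesis
    proof (intro allI impI)
      fix k assume k: "k<n"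
      have "\<theta> * (w k * m) \<le> cmod lam * (w k * m)" using th wpos[OF k] mpos by simp
      also have "\<dots> \<le> (\<Sum>l<n. d k l * w l * q l)" using bound[OF k] vq[OF k] qm[OF k] by simp
      also have "\<dots> = m * (\<Sum>l<n. d k l * w l)" using qm by (simp add: sum_distrib_left ac_simps)
      finally have "\<theta> * w k \<le> (\<Sum>l<n. d k l * w l)" using mpos by (simp add: ac_simps)
      hence "\<theta> \<le> (\<Sum>l<n. d k l * w l) / w k" using wpos[OF k] by (simp add: le_divide_eq)
      thus "(\<Sum>l<n. d k l * w l) / w k = \<theta>" using rows[OF k] by simp
    qed
  qed
  show ?thesis using part1 part2 by blast
qed

lemma eig_lower:
  fixes A :: "complex mat" and d :: "nat \<Rightarrow> nat \<Rightarrow> real" and w :: "nat \<Rightarrow> real"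
  assumes A: "A \<in> carrier_mat n n" and n: "0 < n"
  and Aent: "\<And>k l. k<n \<Longrightarrow> l<n \<Longrightarrow> A $$ (k,l) = complex_of_real (d k l)"
  and wpos: "\<And>k. k<n \<Longrightarrow> 0 < w k"
  and rows: "\<And>k. k<n \<Longrightarrow> (\<Sum>l<n. d k l * w l) / w k = \<theta>"
  and th: "0 \<le> \<theta>"
  shows "\<theta> \<le> spectral_radius A"
proof -
  define v where "v = vec n (\<lambda>k. complex_of_real (w k))"
  have rk: "(\<Sum>l<n. d k l * w l) = \<theta> * w k" if "k<n" for k
    using rows[OF that] wpos[OF that] by (simp add: divide_eq_eq)
  have "eigenvector A v (complex_of_real \<theta>)"
    unfolding eigenvector_def
  proof (intro conjI)
    show "v \<in> carrier_vec (dim_row A)" using A unfolding v_def by simp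
    show "v \<noteq> 0\<^sub>v (dim_row A)"
    proof
      assume "v = 0\<^sub>v (dim_row A)"
      hence "v $ 0 = 0" using A n by simp
      thus False using wpos[OF n] n unfolding v_def by simp
    qed
    show "A *\<^sub>v v = complex_of_real \<theta> \<cdot>\<^sub>v v"
    proof (rule eq_vecI)
      fix k assume "k < dim_vec (complex_of_real \<theta> \<cdot>\<^sub>v v)"
      hence k: "k < n" unfolding v_def by simp
      have "(A *\<^sub>v v) $ k = (\<Sum>l<n. complex_of_real (d k l) * complex_of_real (w l))"
        using k A by (auto simp: scalar_prod_def Aent v_def atLeast0LessThan intro!: sum.cong)
      also have "\<dots> = complex_of_real (\<Sum>l<n. d k l * w l)" by simp
      also have "\<dots> = (complex_of_real \<theta> \<cdot>\<^sub>v v) $ k" using k rk[OF k] unfolding v_def by simp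
      finally show "(A *\<^sub>v v) $ k = (complex_of_real \<theta> \<cdot>\<^sub>v v) $ k" .
    qed (use A in \<open>simp add: v_def\<close>)
  qed
  hence "complex_of_real \<theta> \<in> spectrum A" unfolding spectrum_def eigenvalue_def by auto
  hence "norm (complex_of_real \<theta>) \<in> norm ` spectrum A" by blast
  from spectral_radius_mem_max(2)[OF A n this] show ?thesis using th by simp
qed



lemma keyT:
  fixes th N rk ri S e P Sig uk :: real
  assumes thN: "0 < th + N" and D: "0 < th + N + rk - ri"
  and F1: "th * (th + N) = ri * (th + N) + N * S"
  and Sig: "Sig = rk + P / (th + N)"
  and P: "P = N*S - N*(rk - ri) - e"
  and uk: "uk = 1 + (rk - ri)/(th + N)"
  shows "Sig / uk = th - e / (th + N + rk - ri)"
proof -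
  have id: "rk * (th + N) + P = th * (th + N + rk - ri) - e"
    using F1 unfolding P by (simp add: algebra_simps)
  have "Sig = (th * (th + N + rk - ri) - e) / (th + N)"
    using thN unfolding Sig id[symmetric] by (simp add: field_simps)
  moreover have "uk = (th + N + rk - ri) / (th + N)" using thN unfolding uk by (simp add: field_simps)
  ultimately have "Sig / uk = (th * (th + N + rk - ri) - e) / (th + N + rk - ri)"
    using thN D by simp
  also have "\<dots> = th - e / (th + N + rk - ri)" using D by (simp add: diff_divide_distrib)
  finally show ?thesis .
qed

lemma keyF:
  fixes th N rk ri S e P Sig :: real
  assumes thN: "0 < th + N"
  and F1: "th * (th + N) = ri * (th + N) + N * S"
  and Sig: "Sig = rk + P / (th + N)"
  and P: "P = N*S - e"
  shows "Sig = th - ((ri - rk) * (th + N) + e) / (th + N)"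
proof -
  have "th = ri + N * S / (th + N)" using F1 thN by (simp add: field_simps)
  hence "th - ((ri - rk) * (th + N) + e) / (th + N) = ri + N * S / (th + N) - (ri - rk) - e / (th + N)"
    using thN by (simp add: add_divide_distrib)
  also have "\<dots> = rk + (N*S - e) / (th + N)" by (simp add: diff_divide_distrib)
  finally show ?thesis unfolding Sig P by simp
qed
lemma row_analysis:
  fixes n i :: nat and b :: "nat \<Rightarrow> nat \<Rightarrow> real" and r :: "nat \<Rightarrow> real"
    and N S \<theta> :: real and u :: "nat \<Rightarrow> real"
  assumes bpos: "\<And>k l. k<n \<Longrightarrow> l<n \<Longrightarrow> k\<noteq>l \<Longrightarrow> 0 < b k l"
  and bdiag: "\<And>k. k<n \<Longrightarrow> b k k = 0"
  and ble: "\<And>k l. k<n \<Longrightarrow> l<n \<Longrightarrow> b k l \<le> N"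
  and r: "\<And>k. k<n \<Longrightarrow> r k = (\<Sum>l<n. b k l)"
  and sorted: "\<And>k l. k \<le> l \<Longrightarrow> l < n \<Longrightarrow> r l \<le> r k"
  and i: "i<n" and n2: "2 \<le> n"
  and S: "S = (\<Sum>k<i. r k - r i)"
  and th: "\<theta> = (r i - N + sqrt ((r i + N)\<^sup>2 + 4 * N * S)) / 2"
  and u: "u = (\<lambda>k. if k<i then 1 + (r k - r i)/(\<theta>+N) else 1)"
  shows "\<theta> + N > 0 \<and> 0 \<le> \<theta> \<and> (\<forall>k<n. u k > 0) \<and> (\<forall>k<n. (\<Sum>l<n. b k l * u l)/u k \<le> \<theta>) \<and>
    ((\<forall>k<n. (\<Sum>l<n. b k l * u l)/u k = \<theta>) \<longleftrightarrow>
      ((\<forall>k<n. r k = r 0) \<or> (\<exists>t. 1 \<le> t \<and> t \<le> i \<and> (\<forall>k<n. \<forall>l<t. k \<noteq> l \<longrightarrow> b k l = N) \<and>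
          (\<forall>m. t \<le> m \<and> m < n \<longrightarrow> r m = r t))))"
proof -
  have Npos: "0 < N" using bpos[of 0 1] ble[of 0 1] n2 by simp
  have bnn: "0 \<le> b k l" if "k<n" "l<n" for k l
    using bpos[OF that] bdiag[OF that(1)] by (cases "k = l") auto
  have rnn: "0 \<le> r k" if "k<n" for k unfolding r[OF that] using bnn[OF that] by (intro sum_nonneg) auto
  have Snn: "0 \<le> S" unfolding S using sorted i by (intro sum_nonneg) auto
  define X where "X = (r i + N)\<^sup>2 + 4 * N * S"
  have X: "(r i + N)\<^sup>2 \<le> X" unfolding X_def using Npos Snn by simp
  have sX: "r i + N \<le> sqrt X"
    using real_sqrt_le_mono[OF X] rnn[OF i] Npos by simp
  have thri: "r i \<le> \<theta>" using sX unfolding th X_def by simp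
  have thN: "0 < \<theta> + N" using thri rnn[OF i] Npos by simp
  have th0: "0 \<le> \<theta>" using thri rnn[OF i] by simp
  have Xnn: "0 \<le> X" using X by (meson order_trans zero_le_power2)
  have "2*\<theta> - r i + N = sqrt X" unfolding th X_def[symmetric] by (simp add: field_simps)
  hence sq: "(2*\<theta> - r i + N)\<^sup>2 = X" using Xnn by simp
  have F1: "\<theta> * (\<theta> + N) = r i * (\<theta> + N) + N * S"
    using sq unfolding X_def by (simp add: power2_eq_square algebra_simps)
  define e where "e k = (\<Sum>l\<in>{..<i}-{k}. (N - b k l) * (r l - r i))" for k
  have enn: "0 \<le> e k" if k: "k<n" for k
    unfolding e_def
  proof (rule sum_nonneg)
    fix l assume "l \<in> {..<i}-{k}"
    hence l: "l < i" by simp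
    have "0 \<le> N - b k l" using ble[OF k] l i by simp
    moreover have "0 \<le> r l - r i" using sorted[of l i] l i by simp
    ultimately show "0 \<le> (N - b k l) * (r l - r i)" by simp
  qed
  have P: "(\<Sum>l<i. b k l * (r l - r i)) = N*S - (if k<i then N*(r k - r i) else 0) - e k"
    if k: "k<n" for k
  proof -
    have A1: "(\<Sum>l<i. b k l * (r l - r i)) = (\<Sum>l\<in>{..<i}-{k}. b k l * (r l - r i))"
    proof (cases "k < i")
      case True
      thus ?thesis using sum.remove[of "{..<i}" k "\<lambda>l. b k l * (r l - r i)"] bdiag[OF k] by simp
    next
      case False
      hence "{..<i}-{k} = {..<i}" by auto
      thus ?thesis by simp
    qed
    have A2: "(\<Sum>l\<in>{..<i}-{k}. N * (r l - r i)) = N*S - (if k<i then N*(r k - r i) else 0)"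
    proof (cases "k < i")
      case True
      thus ?thesis using sum.remove[of "{..<i}" k "\<lambda>l. N * (r l - r i)"]
        by (simp add: S sum_distrib_left)
    next
      case False
      hence "{..<i}-{k} = {..<i}" by auto
      thus ?thesis using False by (simp add: S sum_distrib_left)
    qed
    have "e k = (\<Sum>l\<in>{..<i}-{k}. N * (r l - r i)) - (\<Sum>l\<in>{..<i}-{k}. b k l * (r l - r i))"
      unfolding e_def by (simp add: sum_subtractf[symmetric] left_diff_distrib)
    thus ?thesis using A1 A2 by simp
  qed
  have RS: "(\<Sum>l<n. b k l * u l) = r k + (\<Sum>l<i. b k l * (r l - r i)) / (\<theta> + N)"
    if k: "k<n" for k
  proof -
    have "(\<Sum>l<n. b k l * u l) = (\<Sum>l<n. b k l + (if l < i then b k l * (r l - r i) / (\<theta> + N) else 0))"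
      unfolding u by (rule sum.cong) (auto simp: algebra_simps)
    also have "\<dots> = r k + (\<Sum>l<n. (if l < i then b k l * (r l - r i) / (\<theta> + N) else 0))"
      using r[OF k] by (simp add: sum.distrib)
    also have "(\<Sum>l<n. (if l < i then b k l * (r l - r i) / (\<theta> + N) else 0))
        = (\<Sum>l\<in>{l\<in>{..<n}. l < i}. b k l * (r l - r i) / (\<theta> + N))"
      by (rule sum.inter_filter[symmetric]) simp
    also have "{l\<in>{..<n}. l < i} = {..<i}" using i by auto
    finally show ?thesis by (simp add: sum_divide_distrib)
  qed
  define g where "g k = (if k<i then e k / (\<theta> + N + r k - r i) else ((r i - r k)*(\<theta>+N) + e k)/(\<theta>+N))" for k
  have Dpos: "0 < \<theta> + N + r k - r i" if "k < i" for k using sorted[of k i] that i thN by simp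
  have upos: "0 < u k" if "k < n" for k
    using Dpos[of k] thN unfolding u by (auto simp: field_simps)
  have key: "(\<Sum>l<n. b k l * u l) / u k = \<theta> - g k" if k: "k<n" for k
  proof (cases "k < i")
    case True
    have uk: "u k = 1 + (r k - r i)/(\<theta>+N)" unfolding u using True by simp
    have "(\<Sum>l<n. b k l * u l) / u k = \<theta> - e k / (\<theta> + N + r k - r i)"
      by (rule keyT[OF thN Dpos[OF True] F1 RS[OF k] _ uk]) (simp add: P[OF k] True)
    thus ?thesis unfolding g_def using True by simp
  next
    case False
    have uk: "u k = 1" unfolding u using False by simp
    have "(\<Sum>l<n. b k l * u l) = \<theta> - ((r i - r k) * (\<theta> + N) + e k) / (\<theta> + N)"
      by (rule keyF[OF thN F1 RS[OF k]]) (simp add: P[OF k] False)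
    thus ?thesis unfolding g_def uk using False by simp
  qed
  have gnn: "0 \<le> g k" if k: "k<n" for k
  proof (cases "k < i")
    case True thus ?thesis unfolding g_def using enn[OF k] Dpos[OF True] by simp
  next
    case False
    have "0 \<le> (r i - r k)*(\<theta>+N)" using sorted[of i k] False k thN by simp
    thus ?thesis unfolding g_def using False enn[OF k] thN by simp
  qed
  have g0: "g k = 0 \<longleftrightarrow> (e k = 0 \<and> (i \<le> k \<longrightarrow> r k = r i))" if k: "k<n" for k
  proof (cases "k < i")
    case True thus ?thesis unfolding g_def using Dpos[OF True] by simp
  next
    case False
    have h1: "0 \<le> (r i - r k)*(\<theta>+N)" using sorted[of i k] False k thN by simp
    have "g k = ((r i - r k)*(\<theta>+N) + e k)/(\<theta>+N)" unfolding g_def using False by simp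
    hence "g k = 0 \<longleftrightarrow> (r i - r k)*(\<theta>+N) + e k = 0" using thN by simp
    also have "\<dots> \<longleftrightarrow> (r i - r k)*(\<theta>+N) = 0 \<and> e k = 0" using h1 enn[OF k] by linarith
    also have "\<dots> \<longleftrightarrow> r k = r i \<and> e k = 0" using thN by auto
    finally show ?thesis using False by auto
  qed
  have e0: "e k = 0 \<longleftrightarrow> (\<forall>l<i. l \<noteq> k \<longrightarrow> b k l = N \<or> r l = r i)" if k: "k<n" for k
  proof -
    have nn: "\<forall>l\<in>{..<i}-{k}. 0 \<le> (N - b k l) * (r l - r i)"
    proof
      fix l assume "l \<in> {..<i}-{k}"
      hence l: "l < i" by simp
      have "0 \<le> N - b k l" using ble[OF k] l i by simp
      moreover have "0 \<le> r l - r i" using sorted[of l i] l i by simp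
      ultimately show "0 \<le> (N - b k l) * (r l - r i)" by simp
    qed
    have "e k = 0 \<longleftrightarrow> (\<forall>l\<in>{..<i}-{k}. (N - b k l) * (r l - r i) = 0)"
      unfolding e_def by (rule sum_nonneg_eq_0_iff) (use nn in auto)
    also have "\<dots> \<longleftrightarrow> (\<forall>l<i. l \<noteq> k \<longrightarrow> b k l = N \<or> r l = r i)"
    proof -
      have "\<And>l. (N - b k l) * (r l - r i) = 0 \<longleftrightarrow> b k l = N \<or> r l = r i" by auto
      thus ?thesis by auto
    qed
    finally show ?thesis .
  qed
  have s1: "((\<Sum>l<n. b k l * u l)/u k = \<theta>) \<longleftrightarrow>
     ((\<forall>l<i. l \<noteq> k \<longrightarrow> b k l = N \<or> r l = r i) \<and> (i \<le> k \<longrightarrow> r k = r i))" if k: "k<n" for k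
  proof -
    have "((\<Sum>l<n. b k l * u l)/u k = \<theta>) \<longleftrightarrow> g k = 0" using key[OF k] by (simp only:) linarith
    also have "\<dots> \<longleftrightarrow> (e k = 0 \<and> (i \<le> k \<longrightarrow> r k = r i))" by (rule g0[OF k])
    also have "\<dots> \<longleftrightarrow> ((\<forall>l<i. l \<noteq> k \<longrightarrow> b k l = N \<or> r l = r i) \<and> (i \<le> k \<longrightarrow> r k = r i))"
      using e0[OF k] by (rule arg_cong[where f="\<lambda>x. x \<and> _"])
    finally show ?thesis .
  qed
  have Qiff: "(\<forall>k<n. (\<Sum>l<n. b k l * u l)/u k = \<theta>) \<longleftrightarrow>
      ((\<forall>k<n. \<forall>l<i. l \<noteq> k \<longrightarrow> b k l = N \<or> r l = r i) \<and> (\<forall>k. i \<le> k \<and> k < n \<longrightarrow> r k = r i))"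
  proof
    assume H: "\<forall>k<n. (\<Sum>l<n. b k l * u l)/u k = \<theta>"
    have HH: "((\<forall>l<i. l \<noteq> k \<longrightarrow> b k l = N \<or> r l = r i) \<and> (i \<le> k \<longrightarrow> r k = r i))" if k: "k<n" for k
      using s1[OF k] H k by blast
    show "(\<forall>k<n. \<forall>l<i. l \<noteq> k \<longrightarrow> b k l = N \<or> r l = r i) \<and> (\<forall>k. i \<le> k \<and> k < n \<longrightarrow> r k = r i)"
    proof (intro conjI allI impI)
      fix k l assume kl: "k<n" "l<i" "l\<noteq>k"
      thus "b k l = N \<or> r l = r i" using HH[OF kl(1)] by blast
    next
      fix k assume k: "i \<le> k \<and> k < n"
      thus "r k = r i" using HH[of k] by blast
    qed
  next
    assume H: "(\<forall>k<n. \<forall>l<i. l \<noteq> k \<longrightarrow> b k l = N \<or> r l = r i) \<and> (\<forall>k. i \<le> k \<and> k < n \<longrightarrow> r k = r i)"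
    show "\<forall>k<n. (\<Sum>l<n. b k l * u l)/u k = \<theta>"
    proof (intro allI impI)
      fix k assume k: "k<n"
      have "((\<forall>l<i. l \<noteq> k \<longrightarrow> b k l = N \<or> r l = r i) \<and> (i \<le> k \<longrightarrow> r k = r i))"
        using H k by blast
      thus "(\<Sum>l<n. b k l * u l)/u k = \<theta>" using s1[OF k] by blast
    qed
  qed
  have Qcond: "((\<forall>k<n. \<forall>l<i. l \<noteq> k \<longrightarrow> b k l = N \<or> r l = r i) \<and> (\<forall>k. i \<le> k \<and> k < n \<longrightarrow> r k = r i))
     \<longleftrightarrow> ((\<forall>k<n. r k = r 0) \<or> (\<exists>t. 1 \<le> t \<and> t \<le> i \<and> (\<forall>k<n. \<forall>l<t. k \<noteq> l \<longrightarrow> b k l = N) \<and>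
          (\<forall>m. t \<le> m \<and> m < n \<longrightarrow> r m = r t)))" (is "?Q \<longleftrightarrow> ?C")
  proof
    assume Q: ?Q
    have Q1: "b k l = N \<or> r l = r i" if "k<n" "l<i" "l\<noteq>k" for k l using Q that by blast
    have Q2: "r k = r i" if "i \<le> k" "k<n" for k using Q that by blast
    define t where "t = (LEAST t. r t = r i)"
    have ti: "t \<le> i" unfolding t_def by (rule Least_le) simp
    have rt: "r t = r i" unfolding t_def by (rule LeastI[of _ i]) simp
    have lt: "r l \<noteq> r i" if "l < t" for l using not_less_Least[of l "\<lambda>t. r t = r i"] that unfolding t_def by simp
    have mt: "r m = r t" if "t \<le> m" "m < n" for m
    proof (cases "m \<le> i")
      case True
      thus ?thesis using sorted[of t m] sorted[of m i] that i rt by simp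
    next
      case False thus ?thesis using Q2[of m] that rt by simp
    qed
    show ?C
    proof (cases "t = 0")
      case True
      have "\<forall>k<n. r k = r 0"
      proof (intro allI impI)
        fix k assume "k<n" thus "r k = r 0" using mt[of k] True by simp
      qed
      thus ?thesis by (rule disjI1)
    next
      case False
      have bN: "\<forall>k<n. \<forall>l<t. k \<noteq> l \<longrightarrow> b k l = N"
      proof (intro allI impI)
        fix k l assume "k<n" "l<t" "k\<noteq>l"
        thus "b k l = N" using Q1[of k l] lt[of l] ti by auto
      qed
      have mt': "\<forall>m. t \<le> m \<and> m < n \<longrightarrow> r m = r t" using mt by blast
      have t1: "1 \<le> t" using False by simp
      show ?thesis by (rule disjI2, rule exI[of _ t], intro conjI t1 ti bN mt')
    qed
  next
    assume ?C
    thus ?Q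
    proof
      assume all: "\<forall>k<n. r k = r 0"
      have ri: "r i = r 0" using all[rule_format, OF i] .
      show ?Q
      proof (intro conjI allI impI)
        fix k l assume "k < n" "l < i" "l \<noteq> k"
        hence "r l = r 0" using all[rule_format, of l] i by simp
        thus "b k l = N \<or> r l = r i" using ri by simp
      next
        fix k assume "i \<le> k \<and> k < n"
        hence "r k = r 0" using all[rule_format, of k] by simp
        thus "r k = r i" using ri by simp
      qed
    next
      assume "\<exists>t. 1 \<le> t \<and> t \<le> i \<and> (\<forall>k<n. \<forall>l<t. k \<noteq> l \<longrightarrow> b k l = N) \<and>
          (\<forall>m. t \<le> m \<and> m < n \<longrightarrow> r m = r t)"
      then obtain t where t: "t \<le> i" "\<forall>k<n. \<forall>l<t. k \<noteq> l \<longrightarrow> b k l = N"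
          "\<forall>m. t \<le> m \<and> m < n \<longrightarrow> r m = r t" by blast
      have ri: "r i = r t" using t(3)[rule_format, of i] t(1) i by blast
      show ?Q
      proof (intro conjI allI impI)
        fix k l assume kl: "k < n" "l < i" "l \<noteq> k"
        show "b k l = N \<or> r l = r i"
        proof (cases "l < t")
          case True thus ?thesis using t(2) kl by auto
        next
          case False
          hence "r l = r t" using t(3)[rule_format, of l] kl i by simp
          thus ?thesis using ri by simp
        qed
      next
        fix k assume "i \<le> k \<and> k < n"
        hence "r k = r t" using t(1) t(3)[rule_format, of k] by simp
        thus "r k = r i" using ri by simp
      qed
    qed
  qed
  have le: "\<forall>k<n. (\<Sum>l<n. b k l * u l)/u k \<le> \<theta>"
  proof (intro allI impI)
    fix k assume k: "k<n" show "(\<Sum>l<n. b k l * u l)/u k \<le> \<theta>" unfolding key[OF k] using gnn[OF k] by simp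
  qed
  have up: "\<forall>k<n. u k > 0" using upos by blast
  show ?thesis using thN th0 up le trans[OF Qiff Qcond] by (intro conjI)
qed


theorem theorem5:
  fixes n :: nat and E :: "nat \<Rightarrow> nat \<Rightarrow> bool" and \<alpha> :: real and i :: nat
  defines "M \<equiv> gen_avg_trans n E \<alpha>"
    and "N \<equiv> Max {real (gdist n E k l) * transmission n E l powr \<alpha> / transmission n E k powr \<alpha>
                   | k l. k < n \<and> l < n}"
  assumes conn: "connected_graph n E"
    and n2: "n \<ge> 2"
    and sorted: "\<And>k l. k \<le> l \<Longrightarrow> l < n \<Longrightarrow> M l \<le> M k"
    and i: "i < n"
  shows "spectral_radius (dist_mat n E)
           \<le> (M i - N + sqrt ((M i + N)\<^sup>2 + 4 * N * (\<Sum>k<i. M k - M i))) / 2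
    \<and> (spectral_radius (dist_mat n E)
           = (M i - N + sqrt ((M i + N)\<^sup>2 + 4 * N * (\<Sum>k<i. M k - M i))) / 2
         \<longleftrightarrow> (\<forall>k<n. M k = M 0) \<or>
             (\<exists>t. 1 \<le> t \<and> t \<le> i \<and>
                 (\<forall>k<n. \<forall>l<t. k \<noteq> l \<longrightarrow>
                    real (gdist n E k l) * transmission n E l powr \<alpha> / transmission n E k powr \<alpha> = N) \<and>
                 (\<forall>m. t \<le> m \<and> m < n \<longrightarrow> M m = M t)))"
proof -
  define T where "T k = transmission n E k powr \<alpha>" for k
  define d where "d k l = real (gdist n E k l)" for k l
  have Tpos: "0 < T k" if "k<n" for k
    unfolding T_def using transmission_pos[OF conn n2 that] by simp
  have bpos: "0 < real (gdist n E k l) * transmission n E l powr \<alpha> / transmission n E k powr \<alpha>"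
    if "k<n" "l<n" "k\<noteq>l" for k l
    using gdist_pos[OF conn that] Tpos[OF that(1)] Tpos[OF that(2)] unfolding T_def by simp
  have bdiag: "real (gdist n E k k) * transmission n E k powr \<alpha> / transmission n E k powr \<alpha> = 0"
    if "k<n" for k using gdist_self[OF that] by simp
  have fin: "finite {real (gdist n E k l) * transmission n E l powr \<alpha> / transmission n E k powr \<alpha>
                   | k l. k < n \<and> l < n}" by (rule finite_image_set2) auto
  have ble: "real (gdist n E k l) * transmission n E l powr \<alpha> / transmission n E k powr \<alpha> \<le> N"
    if "k<n" "l<n" for k l unfolding N_def by (rule Max_ge[OF fin]) (use that in blast)
  have r: "M k = (\<Sum>l<n. real (gdist n E k l) * transmission n E l powr \<alpha> / transmission n E k powr \<alpha>)"
    if "k<n" for k unfolding M_def gen_avg_trans_def by (simp add: sum_divide_distrib)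
  define \<theta> where "\<theta> = (M i - N + sqrt ((M i + N)\<^sup>2 + 4 * N * (\<Sum>k<i. M k - M i))) / 2"
  define u where "u = (\<lambda>k. if k<i then 1 + (M k - M i)/(\<theta>+N) else 1)"
  note RA = row_analysis[of n "\<lambda>k l. real (gdist n E k l) * transmission n E l powr \<alpha> / transmission n E k powr \<alpha>"
      N M i "\<Sum>k<i. M k - M i" \<theta> u, OF bpos bdiag ble r sorted i n2 refl \<theta>_def u_def]
  have thN: "0 < \<theta> + N" and th0: "0 \<le> \<theta>" and upos: "\<forall>k<n. 0 < u k"
    and le: "\<forall>k<n. (\<Sum>l<n. real (gdist n E k l) * transmission n E l powr \<alpha> / transmission n E k powr \<alpha> * u l) / u k \<le> \<theta>"
    and eqiff: "(\<forall>k<n. (\<Sum>l<n. real (gdist n E k l) * transmission n E l powr \<alpha> / transmission n E k powr \<alpha> * u l) / u k = \<theta>)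
       \<longleftrightarrow> ((\<forall>k<n. M k = M 0) \<or>
             (\<exists>t. 1 \<le> t \<and> t \<le> i \<and>
                 (\<forall>k<n. \<forall>l<t. k \<noteq> l \<longrightarrow>
                    real (gdist n E k l) * transmission n E l powr \<alpha> / transmission n E k powr \<alpha> = N) \<and>
                 (\<forall>m. t \<le> m \<and> m < n \<longrightarrow> M m = M t)))"
    using RA by blast+
  define w where "w k = T k * u k" for k
  have wpos: "0 < w k" if "k<n" for k unfolding w_def using Tpos[OF that] upos that by simp
  have rowid: "(\<Sum>l<n. d k l * w l) / w k =
     (\<Sum>l<n. real (gdist n E k l) * transmission n E l powr \<alpha> / transmission n E k powr \<alpha> * u l) / u k"
    if k: "k<n" for k
  proof -
    have "(\<Sum>l<n. real (gdist n E k l) * transmission n E l powr \<alpha> / transmission n E k powr \<alpha> * u l)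
        = (\<Sum>l<n. d k l * w l) / T k"
      unfolding sum_divide_distrib d_def w_def T_def by (rule sum.cong) auto
    thus ?thesis unfolding w_def by simp
  qed
  let ?A = "dist_mat n E"
  have A: "?A \<in> carrier_mat n n" unfolding dist_mat_def by simp
  have Aent: "?A $$ (k,l) = complex_of_real (d k l)" if "k<n" "l<n" for k l
    unfolding dist_mat_def d_def using that by simp
  have dnn: "0 \<le> d k l" for k l unfolding d_def by simp
  have dpos: "\<forall>k l. k<n \<longrightarrow> l<n \<longrightarrow> k\<noteq>l \<longrightarrow> 0 < d k l"
    unfolding d_def using gdist_pos[OF conn] by simp
  have rows: "(\<Sum>l<n. d k l * w l) / w k \<le> \<theta>" if "k<n" for k
    unfolding rowid[OF that] using le that by simp
  have n0: "0 < n" using n2 by simp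
  obtain lam where lam: "lam \<in> spectrum ?A" "spectral_radius ?A = cmod lam"
    using spectral_radius_mem_max(1)[OF A n0] by auto
  obtain v where ev: "eigenvector ?A v lam" using lam(1) unfolding spectrum_def eigenvalue_def by auto
  note EC = eig_core[OF A Aent ev wpos dnn rows]
  have part1: "spectral_radius ?A \<le> \<theta>" using EC lam(2) by simp
  have part2: "spectral_radius ?A = \<theta> \<longleftrightarrow> (\<forall>k<n. (\<Sum>l<n. real (gdist n E k l) * transmission n E l powr \<alpha> / transmission n E k powr \<alpha> * u l) / u k = \<theta>)"
  proof
    assume "spectral_radius ?A = \<theta>"
    hence "\<forall>k<n. (\<Sum>l<n. d k l * w l) / w k = \<theta>" using EC dpos lam(2) by simp
    thus "\<forall>k<n. (\<Sum>l<n. real (gdist n E k l) * transmission n E l powr \<alpha> / transmission n E k powr \<alpha> * u l) / u k = \<theta>"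
      using rowid by simp
  next
    assume H: "\<forall>k<n. (\<Sum>l<n. real (gdist n E k l) * transmission n E l powr \<alpha> / transmission n E k powr \<alpha> * u l) / u k = \<theta>"
    have R: "(\<Sum>l<n. d k l * w l) / w k = \<theta>" if k: "k<n" for k
      unfolding rowid[OF k] using H k by blast
    have "\<theta> \<le> spectral_radius ?A"
      by (rule eig_lower[OF A n0 Aent wpos R th0])
    thus "spectral_radius ?A = \<theta>" using part1 by simp
  qed
  show ?thesis using part1 part2 eqiff unfolding \<theta>_def[symmetric] by blast
qed

end
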